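(* Let $k$ be a field of characteristic $0$, $L/k$ a field extension, and $S\in\mathbf{Fam}_L$ with data $a,b,t_0\in L$ (see context). Then $S$ contains a family of trisections defined over $L$ with a single free parameter $\gamma$, namely curves on $\mathcal{E}$ of the form $y=axt+bx+c(\gamma)t^3+d(\gamma)t^2+e(\gamma)t+\gamma$ with $c(\gamma),d(\gamma),e(\gamma)\in L$, each of which has a triple singularity at the point $Q=\big((at_0+b)^2/3,\ (at_0+b)^3/6+f(t_0)/(2(at_0+b)),\ t_0\big)$.
   Context: $S$ is a del Pezzo surface of degree one given in $\mathbb{P}(2,3,1,1)$, coordinates $(X:Y:Z:W)$, by $Y^2=X^3+F(Z,W)X+G(Z,W)$ with $F,G\in k[Z,W]$ homogeneous of degrees $4,6$; $f(t)=F(t,1)$, $g(t)=G(t,1)$; $\mathcal{E}:y^2=x^3+f(t)x+g(t)$ is the rational elliptic surface obtained by blowing up the base point of $|-K_S|$ ($t=Z/W$). A trisection is a member of $|-3K_S|$, realized on $\mathcal{E}$ as a curve $y=\alpha xt+\beta x+ct^3+dt^2+et+h$. $S\in\mathbf{Fam}_L$ means there exist $a,b,t_0\in L$ with $t_0\neq0$, $at_0+b\neq0$, $f(t_0)\neq-(at_0+b)^4/3$, such that $t_0$ is a double root of $P(t)=-f(t)^2/4+(at+b)^4f(t)/6+(at+b)^2g(t)+(at+b)^8/108$. *)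

theory Defs
  imports "HOL-Computational_Algebra.Polynomial"
begin

text \<open>K is a subfield of the ambient field (the base field k inside L).\<close>
definition is_subfield :: "'a::field set \<Rightarrow> bool" where
  "is_subfield K \<longleftrightarrow> 0 \<in> K \<and> 1 \<in> K \<and>
     (\<forall>x\<in>K. \<forall>y\<in>K. x + y \<in> K \<and> x * y \<in> K) \<and>
     (\<forall>x\<in>K. - x \<in> K) \<and> (\<forall>x\<in>K. x \<noteq> 0 \<longrightarrow> inverse x \<in> K)"

definition Fam_poly :: "'a::field_char_0 poly \<Rightarrow> 'a poly \<Rightarrow> 'a \<Rightarrow> 'a \<Rightarrow> 'a poly" where
  "Fam_poly f g a b =
     (let l = [:b, a:] in
      smult (- 1 / 4) (f ^ 2) + smult (1 / 6) (l ^ 4 * f) + l ^ 2 * g + smult (1 / 108) (l ^ 8))"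

text \<open>Membership of S in Fam_L witnessed by data a, b, t0 (t0 a double root of P).\<close>
definition Fam_data :: "'a::field_char_0 poly \<Rightarrow> 'a poly \<Rightarrow> 'a \<Rightarrow> 'a \<Rightarrow> 'a \<Rightarrow> bool" where
  "Fam_data f g a b t0 \<longleftrightarrow> t0 \<noteq> 0 \<and> a * t0 + b \<noteq> 0 \<and>
     poly f t0 \<noteq> - ((a * t0 + b) ^ 4) / 3 \<and> [:- t0, 1:] ^ 2 dvd Fam_poly f g a b"

text \<open>Bivariate polynomials in (x,t): outer variable t, coefficients are polynomials in x.\<close>
definition eval2 :: "'a::comm_ring_1 poly poly \<Rightarrow> 'a \<Rightarrow> 'a \<Rightarrow> 'a" where
  "eval2 P x t = poly (poly P [:t:]) x"

text \<open>The trisection y = al x t + be x + c t^3 + d t^2 + e t + h, as h(x,t) in L[x][t].\<close>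
definition trisec_h :: "'a::comm_ring_1 \<Rightarrow> 'a \<Rightarrow> 'a \<Rightarrow> 'a \<Rightarrow> 'a \<Rightarrow> 'a \<Rightarrow> 'a poly poly" where
  "trisec_h al be c d e h = [: [:h, be:], [:e, al:], [:d:], [:c:] :]"

text \<open>Plane model of the trisection on E (y eliminated): h(x,t)^2 - x^3 - f(t) x - g(t).\<close>
definition trisec_eqn :: "'a::comm_ring_1 \<Rightarrow> 'a \<Rightarrow> 'a \<Rightarrow> 'a \<Rightarrow> 'a \<Rightarrow> 'a \<Rightarrow> 'a poly \<Rightarrow> 'a poly \<Rightarrow> 'a poly poly" where
  "trisec_eqn al be c d e h f g =
     (trisec_h al be c d e h) ^ 2 - [: [:0, 0, 0, 1:] :]
     - map_poly (\<lambda>r. [:0, r:]) f - map_poly (\<lambda>r. [:r:]) g"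

text \<open>Multiplicity at least m at (x0,t0): all partial derivatives of order < m vanish (char 0).\<close>
definition mult_ge :: "'a::idom poly poly \<Rightarrow> nat \<Rightarrow> 'a \<Rightarrow> 'a \<Rightarrow> bool" where
  "mult_ge P m x0 t0 \<longleftrightarrow>
     (\<forall>i j. i + j < m \<longrightarrow> eval2 ((map_poly pderiv ^^ i) ((pderiv ^^ j) P)) x0 t0 = 0)"

definition triple_point :: "'a::idom poly poly \<Rightarrow> 'a \<Rightarrow> 'a \<Rightarrow> bool" where
  "triple_point P x0 t0 \<longleftrightarrow> mult_ge P 3 x0 t0 \<and> \<not> mult_ge P 4 x0 t0"

end

theory Submission
  imports Defs
begin

lemma L1: "poly (map_poly pderiv Q) [:t:] = pderiv (poly Q [:t:])"
  by (induction Q rule: pCons_induct) (auto simp: map_poly_pCons pderiv_add pderiv_mult pderiv_pCons pderiv_smult)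

lemma L1n: "poly ((map_poly pderiv ^^ i) Q) [:t:] = (pderiv ^^ i) (poly Q [:t:])"
  by (induction i) (auto simp: L1)

lemma L2a: "pderiv (map_poly (\<lambda>r. [:0, r:]) f) = map_poly (\<lambda>r. [:0, r:]) (pderiv (f::'a::idom poly))"
  by (rule poly_eqI) (simp add: coeff_map_poly coeff_pderiv of_nat_poly)

lemma L2b: "pderiv (map_poly (\<lambda>r. [:r:]) f) = map_poly (\<lambda>r. [:r:]) (pderiv (f::'a::idom poly))"
  by (rule poly_eqI) (simp add: coeff_map_poly coeff_pderiv of_nat_poly)

lemma L3a: "poly (map_poly (\<lambda>r. [:0, r:]) f) [:t:] = [:0, poly f t:]"
  by (induction f rule: pCons_induct) (auto simp: map_poly_pCons mult.commute)

lemma L3b: "poly (map_poly (\<lambda>r. [:r:]) f) [:t:] = [:poly f t:]"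
  by (induction f rule: pCons_induct) (auto simp: map_poly_pCons mult.commute)

lemma dvd2: "[:- t0, 1:] ^ 2 dvd p \<Longrightarrow> poly p t0 = 0 \<and> poly (pderiv p) t0 = (0::'a::idom)"
proof -
  assume "[:- t0, 1:] ^ 2 dvd p"
  then obtain k where k: "p = [:- t0, 1:] ^ 2 * k" by (auto simp: dvd_def)
  define q where "q = [:- t0, 1:]"
  have q0: "poly q t0 = 0" by (simp add: q_def)
  have "pderiv p = q^2 * pderiv k + k * (smult 2 q * pderiv q)"
    unfolding k q_def[symmetric] pderiv_mult
    using pderiv_power_Suc[of q 1] by (simp add: numeral_2_eq_2)
  then show ?thesis using q0 k q_def by simp
qed

lemma E: "eval2 ((map_poly pderiv ^^ i) ((pderiv ^^ j) P)) x t = poly ((pderiv^^i) (poly ((pderiv^^j) P) [:t:])) x"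
  by (simp add: eval2_def L1n)


lemma H0: "poly (trisec_h al be c d e h) [:t:] = [:c*t^3+d*t^2+e*t+h, al*t+be:]"
  by (simp add: trisec_h_def algebra_simps power2_eq_square power3_eq_cube)
lemma H1: "poly (pderiv (trisec_h al be c d e h)) [:t:] = [:3*c*t^2+2*d*t+e, al:]"
  by (simp add: trisec_h_def pderiv_pCons algebra_simps power2_eq_square)
lemma H2: "poly (pderiv (pderiv (trisec_h al be c d e (h::'a::field_char_0)))) [:t:] = [:6*c*t+2*d:]"
  by (simp add: trisec_h_def pderiv_pCons algebra_simps power2_eq_square)

lemma PJ0:
  fixes f g :: "'a::field_char_0 poly" shows "poly (trisec_eqn al be c d e h f g) [:t:] =
   (poly (trisec_h al be c d e h) [:t:])^2 - [:0,0,0,1:] - [:0, poly f t:] - [:poly g t:]"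
  by (simp add: trisec_eqn_def L3a L3b)

lemma PJ1:
  fixes f g :: "'a::field_char_0 poly" shows "poly (pderiv (trisec_eqn al be c d e h f g)) [:t:] =
   2 * (poly (trisec_h al be c d e h) [:t:]) * poly (pderiv (trisec_h al be c d e h)) [:t:]
   - [:0, poly (pderiv f) t:] - [:poly (pderiv g) t:]"
  by (simp add: trisec_eqn_def pderiv_diff L2a L2b L3a L3b power2_eq_square pderiv_mult)

lemma PJ2:
  fixes f g :: "'a::field_char_0 poly" shows "poly (pderiv (pderiv (trisec_eqn al be c d e h f g))) [:t:] =
   2 * ((poly (pderiv (trisec_h al be c d e h)) [:t:])^2 + poly (trisec_h al be c d e h) [:t:] * poly (pderiv (pderiv (trisec_h al be c d e h))) [:t:])
   - [:0, poly (pderiv (pderiv f)) t:] - [:poly (pderiv (pderiv g)) t:]"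
  by (simp add: trisec_eqn_def pderiv_diff L2a L2b L3a L3b power2_eq_square pderiv_mult pderiv_add algebra_simps)


lemma vals:
  fixes f g :: "'a::field_char_0 poly"
  shows "eval2 ((map_poly pderiv ^^ 0) ((pderiv ^^ 0) (trisec_eqn al be c d e h f g))) x t
     = ((al*t+be)*x + (c*t^3+d*t^2+e*t+h))^2 - x^3 - poly f t * x - poly g t"
  and "eval2 ((map_poly pderiv ^^ 1) ((pderiv ^^ 0) (trisec_eqn al be c d e h f g))) x t
     = 2*(al*t+be)*((al*t+be)*x + (c*t^3+d*t^2+e*t+h)) - 3*x^2 - poly f t"
  and "eval2 ((map_poly pderiv ^^ 2) ((pderiv ^^ 0) (trisec_eqn al be c d e h f g))) x t
     = 2*(al*t+be)^2 - 6*x"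
  and "eval2 ((map_poly pderiv ^^ 3) ((pderiv ^^ 0) (trisec_eqn al be c d e h f g))) x t = -6"
  and "eval2 ((map_poly pderiv ^^ 0) ((pderiv ^^ 1) (trisec_eqn al be c d e h f g))) x t
     = 2*((al*t+be)*x + (c*t^3+d*t^2+e*t+h))*(al*x + (3*c*t^2+2*d*t+e)) - poly (pderiv f) t * x - poly (pderiv g) t"
  and "eval2 ((map_poly pderiv ^^ 1) ((pderiv ^^ 1) (trisec_eqn al be c d e h f g))) x t
     = 2*al*((al*t+be)*x + (c*t^3+d*t^2+e*t+h)) + 2*(al*t+be)*(al*x + (3*c*t^2+2*d*t+e)) - poly (pderiv f) t"
  and "eval2 ((map_poly pderiv ^^ 0) ((pderiv ^^ 2) (trisec_eqn al be c d e h f g))) x t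
     = 2*(al*x + (3*c*t^2+2*d*t+e))^2 + 2*((al*t+be)*x + (c*t^3+d*t^2+e*t+h))*(6*c*t+2*d)
       - poly (pderiv (pderiv f)) t * x - poly (pderiv (pderiv g)) t"
  unfolding E
  by (simp_all add: numeral_2_eq_2 numeral_3_eq_3 PJ0 PJ1 PJ2 H0 H1 H2 pderiv_mult pderiv_pCons
     pderiv_add pderiv_diff pderiv_smult power2_eq_square power3_eq_cube algebra_simps)


lemma FP0: fixes f g :: "'a::field_char_0 poly" shows "poly (Fam_poly f g a b) t0 = (poly f t0)^2*(-1/4) + (a*t0+b)^4*poly f t0/6 + (a*t0+b)^2*poly g t0 + (a*t0+b)^8/108"
  by (simp add: Fam_poly_def Let_def algebra_simps)

lemma FP1: fixes f g :: "'a::field_char_0 poly" shows "poly (pderiv (Fam_poly f g a b)) t0 = (poly f t0)*poly (pderiv f) t0*(-1/2)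
   + (4*a*(a*t0+b)^3*poly f t0 + (a*t0+b)^4*poly (pderiv f) t0)/6 + 2*a*(a*t0+b)*poly g t0
   + (a*t0+b)^2*poly (pderiv g) t0 + 8*a*(a*t0+b)^7/108"
  by (simp add: Fam_poly_def Let_def pderiv_add pderiv_diff pderiv_mult pderiv_smult pderiv_power pderiv_pCons algebra_simps)


theorem lemma3p5:
  fixes K :: "'a::field_char_0 set" and f g :: "'a poly" and a b t0 :: 'a
  assumes "is_subfield K"
    and "\<forall>i. coeff f i \<in> K" and "\<forall>i. coeff g i \<in> K"
    and "degree f \<le> 4" and "degree g \<le> 6"
    and "Fam_data f g a b t0"
  shows "\<exists>c d e :: 'a \<Rightarrow> 'a. \<forall>\<gamma>.
           (let u = a * t0 + b; xQ = u ^ 2 / 3; yQ = u ^ 3 / 6 + poly f t0 / (2 * u) in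
              yQ = eval2 (trisec_h a b (c \<gamma>) (d \<gamma>) (e \<gamma>) \<gamma>) xQ t0 \<and>
              triple_point (trisec_eqn a b (c \<gamma>) (d \<gamma>) (e \<gamma>) \<gamma> f g) xQ t0)"
proof -
  define u where "u = a * t0 + b"
  define f0 where "f0 = poly f t0"
  define f1 where "f1 = poly (pderiv f) t0"
  define f2 where "f2 = poly (pderiv (pderiv f)) t0"
  define g0 where "g0 = poly g t0"
  define g1 where "g1 = poly (pderiv g) t0"
  define g2 where "g2 = poly (pderiv (pderiv g)) t0"
  have t0: "t0 \<noteq> 0" and u0: "u \<noteq> 0" and fne: "f0 \<noteq> - (u ^ 4) / 3"
    and dv: "[:- t0, 1:] ^ 2 dvd Fam_poly f g a b"
    using assms(6) by (auto simp: Fam_data_def u_def f0_def)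
  have Pz: "f0^2*(-1/4) + u^4*f0/6 + u^2*g0 + u^8/108 = 0"
    using dvd2[OF dv] FP0[of f g a b t0] by (simp add: u_def f0_def g0_def)
  have Pd: "f0*f1*(-1/2) + (4*a*u^3*f0 + u^4*f1)/6 + 2*a*u*g0 + u^2*g1 + 8*a*u^7/108 = 0"
    using dvd2[OF dv] FP1[of f g a b t0] by (simp add: u_def f0_def g0_def f1_def g1_def)
  define x0 where "x0 = u^2/3"
  define y0 where "y0 = u^3/6 + f0/(2*u)"
  have y0nz: "y0 \<noteq> 0"
  proof
    assume "y0 = 0"
    then have "u^4 + 3*f0 = 0" using u0 by (simp add: y0_def field_simps power_def)
    then show False using fne by (simp add: field_simps eq_neg_iff_add_eq_0 add.commute)
  qed
  define M0 where "M0 = y0 - u*x0"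
  define M1 where "M1 = (f1*x0 + g1)/(2*y0) - a*x0"
  define M2 where "M2 = (f2*x0 + g2 - 2*(a*x0+M1)^2)/(2*y0)"
  define cc where "cc = (\<lambda>\<gamma>. (M0 - M1*t0 + M2/2*t0^2 - \<gamma>)/t0^3)"
  define dd where "dd = (\<lambda>\<gamma>. M2/2 - 3*cc \<gamma>*t0)"
  define ee where "ee = (\<lambda>\<gamma>. M1 - M2*t0 + 3*cc \<gamma>*t0^2)"
  have V00: "(u*x0 + M0)^2 - x0^3 - f0*x0 - g0 = 0"
  proof -
    have "(u*x0 + M0)^2 - x0^3 - f0*x0 - g0 = - (f0^2*(-1/4) + u^4*f0/6 + u^2*g0 + u^8/108) / u^2"
      using u0 by (simp add: M0_def x0_def y0_def field_simps) (simp add: algebra_simps power_def)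
    then show ?thesis by (simp only: Pz) simp
  qed
  have V10: "2*u*(u*x0 + M0) - 3*x0^2 - f0 = 0"
    using u0 by (simp add: M0_def x0_def y0_def field_simps) (simp add: algebra_simps power_def)
  have V20: "2*u^2 - 6*x0 = 0" by (simp add: x0_def)
  have V01: "2*(u*x0 + M0)*(a*x0 + M1) - f1*x0 - g1 = 0"
    using y0nz by (simp add: M0_def M1_def field_simps)
  have Z: "(a*x0+M1)*(2*y0) = f1*x0+g1" using y0nz by (simp add: M1_def field_simps)
  have V11: "2*a*(u*x0 + M0) + 2*u*(a*x0 + M1) - f1 = 0"
  proof -
    have "(2*a*(u*x0 + M0) + 2*u*(a*x0 + M1) - f1) * (u*y0) =
       2*a*u*y0^2 + u^2*((a*x0+M1)*(2*y0)) - f1*u*y0"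
      by (simp add: M0_def algebra_simps power2_eq_square)
    also have "\<dots> = 2*a*u*y0^2 + u^2*(f1*x0+g1) - f1*u*y0" by (simp only: Z)
    also have "\<dots> = (f0*f1*(-1/2) + (4*a*u^3*f0 + u^4*f1)/6 + 2*a*u*g0 + u^2*g1 + 8*a*u^7/108)
      - 2*a/u * (f0^2*(-1/4) + u^4*f0/6 + u^2*g0 + u^8/108)"
      using u0 by (simp add: x0_def y0_def field_simps) (simp add: algebra_simps power_def)
    finally have "(2*a*(u*x0 + M0) + 2*u*(a*x0 + M1) - f1) * (u*y0) = 0" by (simp only: Pz Pd) simp
    then show ?thesis using u0 y0nz by simp
  qed
  have V02: "2*(a*x0 + M1)^2 + 2*(u*x0 + M0)*M2 - f2*x0 - g2 = 0"
    using y0nz by (simp add: M0_def M2_def field_simps)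
  show ?thesis
  proof (intro exI allI)
    fix \<gamma>
    have m0: "cc \<gamma>*t0^3 + dd \<gamma>*t0^2 + ee \<gamma>*t0 + \<gamma> = M0"
      using t0 by (simp add: cc_def dd_def ee_def field_simps) (simp add: algebra_simps power_def)
    have m1: "3*cc \<gamma>*t0^2 + 2*dd \<gamma>*t0 + ee \<gamma> = M1"
      by (simp add: dd_def ee_def algebra_simps power_def)
    have m2: "6*cc \<gamma>*t0 + 2*dd \<gamma> = M2"
      by (simp add: dd_def algebra_simps)
    have uu: "a*t0+b = u" by (simp add: u_def)
    note vs = vals[where al=a and be=b and c="cc \<gamma>" and d="dd \<gamma>" and e="ee \<gamma>" and h=\<gamma> and f=f and g=g
       and x=x0 and t=t0, unfolded uu m0 m1 m2, folded f0_def f1_def f2_def g0_def g1_def g2_def]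
    have A: "y0 = eval2 (trisec_h a b (cc \<gamma>) (dd \<gamma>) (ee \<gamma>) \<gamma>) x0 t0"
    proof -
      have "eval2 (trisec_h a b (cc \<gamma>) (dd \<gamma>) (ee \<gamma>) \<gamma>) x0 t0
         = (cc \<gamma>*t0^3 + dd \<gamma>*t0^2 + ee \<gamma>*t0 + \<gamma>) + x0*(a*t0+b)"
        by (simp add: eval2_def H0)
      then show ?thesis using m0 by (simp add: u_def M0_def algebra_simps)
    qed
    have B: "mult_ge (trisec_eqn a b (cc \<gamma>) (dd \<gamma>) (ee \<gamma>) \<gamma> f g) 3 x0 t0"
      unfolding mult_ge_def
    proof (intro allI impI)
      fix i j :: nat assume "i + j < 3"
      then have "(i=0 \<and> j=0) \<or> (i=1 \<and> j=0) \<or> (i=2 \<and> j=0) \<or> (i=0 \<and> j=1) \<or> (i=1 \<and> j=1) \<or> (i=0 \<and> j=2)"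
        by arith
      then show "eval2 ((map_poly pderiv ^^ i) ((pderiv ^^ j) (trisec_eqn a b (cc \<gamma>) (dd \<gamma>) (ee \<gamma>) \<gamma> f g))) x0 t0 = 0"
        using vs V00 V10 V20 V01 V11 V02 by auto
    qed
    have C: "\<not> mult_ge (trisec_eqn a b (cc \<gamma>) (dd \<gamma>) (ee \<gamma>) \<gamma> f g) 4 x0 t0"
      unfolding mult_ge_def
    proof
      assume H: "\<forall>i j. i + j < 4 \<longrightarrow> eval2 ((map_poly pderiv ^^ i) ((pderiv ^^ j) (trisec_eqn a b (cc \<gamma>) (dd \<gamma>) (ee \<gamma>) \<gamma> f g))) x0 t0 = 0"
      have "eval2 ((map_poly pderiv ^^ 3) ((pderiv ^^ 0) (trisec_eqn a b (cc \<gamma>) (dd \<gamma>) (ee \<gamma>) \<gamma> f g))) x0 t0 = 0"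
        using H[rule_format, of 3 0] by simp
      then show False using vs(4) by simp
    qed
    show "let u = a * t0 + b; xQ = u ^ 2 / 3; yQ = u ^ 3 / 6 + poly f t0 / (2 * u) in
              yQ = eval2 (trisec_h a b (cc \<gamma>) (dd \<gamma>) (ee \<gamma>) \<gamma>) xQ t0 \<and>
              triple_point (trisec_eqn a b (cc \<gamma>) (dd \<gamma>) (ee \<gamma>) \<gamma> f g) xQ t0"
      using A B C by (simp add: Let_def triple_point_def uu x0_def y0_def f0_def)
  qed
qed

end
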